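(* Let $X=X_F\uplus X_H$ be a set of $n\ge1$ clocks, $M\in\mathbb{N}$, and let $v_1,v_2$ be valuations with $v_1\sim_M v_2$. Let $L=\{x\in X\mid -M\le v_1(x)\}$. Then there is a valuation $v_2'$ such that $v_2'\!\downarrow_L=v_2\!\downarrow_L$ and $v_1\approx_M v_2'$.
   Context: $X_F$ are future clocks, $X_H$ history clocks. $\overline{\mathbb{R}}=\mathbb{R}\cup\{\pm\infty\}$ with $(+\infty)+\alpha=+\infty$, $(-\infty)+\beta=-\infty$ for $\beta\ne+\infty$, $-(\pm\infty)=\mp\infty$. A valuation $v:X\cup\{0\}\to\overline{\mathbb{R}}$ has $v(0)=0$, $v(x)\in\mathbb{R}_{\ge0}\cup\{+\infty\}$ for $x\in X_H$, $v(x)\in\mathbb{R}_{\le0}\cup\{-\infty\}$ for $x\in X_F$; $v\!\downarrow_L$ is the restriction of $v$ to $L$; $v\models x-y\triangleleft c$ iff $v(x)-v(y)\triangleleft c$. For $\alpha\in\mathbb{R}$, $\{\alpha\}=\alpha-\lfloor\alpha\rfloor$. $\sim$: for $K\in\mathbb{N}$, $\alpha\sim_K\beta$ iff $\alpha\triangleleft c\iff\beta\triangleleft c$ for all ${\triangleleft}\in\{<,\le\}$ and $c\in\{\pm\infty\}$ or $c\in\mathbb{Z}$ with $|c|\le K$; $v_1\sim_M v_2$ iff $v_1(x)\sim_{nM}v_2(x)$ for all $x\in X$ and $v_1(x)-v_1(y)\sim_{(n+1)M}v_2(x)-v_2(y)$ for all $x,y\in X$, with $n=|X|$. $\approx$: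 $v_1\approx_M v_2$ iff for all clocks $x,y$: (1) $v_1(x)\triangleleft c\iff v_2(x)\triangleleft c$ for ${\triangleleft}\in\{<,\le\}$ and $c\in\{\pm\infty\}$ or $c\in\mathbb{Z}$ with $c\le M$; (2) $v_1\models x-y\triangleleft c\iff v_2\models x-y\triangleleft c$ for ${\triangleleft}\in\{<,\le\}$ and $c\in\{\pm\infty\}$ or $c\in\mathbb{Z}$ with $|c|\le M$; (3) if $-\infty<v_1(x),v_1(y)\le M$ then $\{v_1(x)\}\le\{v_1(y)\}\iff\{v_2(x)\}\le\{v_2(y)\}$. *)

theory Defs
  imports "HOL-Library.Extended_Real"
begin

text \<open>Extended reals: Isabelle's ereal has exactly the paper's conventions
  (infinity + a = infinity, -infinity + b = -infinity for b not +infinity,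
  x - y = x + (-y)).  A valuation on clocks of type 'c is a function
  'c => ereal; the special clock 0 is implicit (always value 0).\<close>

definition is_valuation :: "'c set \<Rightarrow> 'c set \<Rightarrow> ('c \<Rightarrow> ereal) \<Rightarrow> bool" where
  "is_valuation XF XH v \<longleftrightarrow> (\<forall>x\<in>XH. 0 \<le> v x) \<and> (\<forall>x\<in>XF. v x \<le> 0)"

definition sim_K :: "nat \<Rightarrow> ereal \<Rightarrow> ereal \<Rightarrow> bool" where
  "sim_K K a b \<longleftrightarrow>
     (\<forall>c::ereal. (c = \<infinity> \<or> c = -\<infinity> \<or> (\<exists>k::int. c = ereal (of_int k) \<and> \<bar>k\<bar> \<le> int K)) \<longrightarrow>
        ((a < c \<longleftrightarrow> b < c) \<and> (a \<le> c \<longleftrightarrow> b \<le> c)))"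

definition sim_val :: "'c set \<Rightarrow> nat \<Rightarrow> ('c \<Rightarrow> ereal) \<Rightarrow> ('c \<Rightarrow> ereal) \<Rightarrow> bool" where
  "sim_val X M v1 v2 \<longleftrightarrow>
     (\<forall>x\<in>X. sim_K (card X * M) (v1 x) (v2 x)) \<and>
     (\<forall>x\<in>X. \<forall>y\<in>X. sim_K ((card X + 1) * M) (v1 x - v1 y) (v2 x - v2 y))"

definition efrac :: "ereal \<Rightarrow> real" where
  "efrac a = frac (real_of_ereal a)"

definition approx_val :: "'c set \<Rightarrow> nat \<Rightarrow> ('c \<Rightarrow> ereal) \<Rightarrow> ('c \<Rightarrow> ereal) \<Rightarrow> bool" where
  "approx_val X M v1 v2 \<longleftrightarrow>
     (\<forall>x\<in>X.
        (\<forall>c::ereal. (c = \<infinity> \<or> c = -\<infinity> \<or> (\<exists>k::int. c = ereal (of_int k) \<and> k \<le> int M)) \<longrightarrow>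
           ((v1 x < c \<longleftrightarrow> v2 x < c) \<and> (v1 x \<le> c \<longleftrightarrow> v2 x \<le> c)))) \<and>
     (\<forall>x\<in>X. \<forall>y\<in>X.
        (\<forall>c::ereal. (c = \<infinity> \<or> c = -\<infinity> \<or> (\<exists>k::int. c = ereal (of_int k) \<and> \<bar>k\<bar> \<le> int M)) \<longrightarrow>
           ((v1 x - v1 y < c \<longleftrightarrow> v2 x - v2 y < c) \<and> (v1 x - v1 y \<le> c \<longleftrightarrow> v2 x - v2 y \<le> c)))) \<and>
     (\<forall>x\<in>X. \<forall>y\<in>X.
        (-\<infinity> < v1 x \<and> v1 x \<le> ereal (real M) \<and> -\<infinity> < v1 y \<and> v1 y \<le> ereal (real M)) \<longrightarrow>
           (efrac (v1 x) \<le> efrac (v1 y) \<longleftrightarrow> efrac (v2 x) \<le> efrac (v2 y)))"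

end

theory Submission
  imports Defs
begin

lemma ext_one:
  fixes f :: "real \<Rightarrow> real"
  assumes "finite A" "0 \<in> A" "strict_mono_on A f" "f ` A \<subseteq> {0..<1}" "t \<in> {0..<1::real}"
  shows "\<exists>g. strict_mono_on (insert t A) g \<and> (\<forall>a\<in>A. g a = f a) \<and> g ` insert t A \<subseteq> {0..<1}"
proof (cases "t \<in> A")
  case True
  then show ?thesis using assms by (intro exI[of _ f]) (auto simp: insert_absorb)
next
  case False
  define D where "D = {a\<in>A. a < t}"
  define U where "U = {a\<in>A. t < a}"
  have tpos: "0 < t" using False assms by (cases "t = 0") auto
  have D: "finite D" "D \<noteq> {}" using assms tpos unfolding D_def by auto
  define lo where "lo = Max D"
  have lo: "lo \<in> A" "lo < t" "\<And>a. a \<in> A \<Longrightarrow> a < t \<Longrightarrow> a \<le> lo"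
    using Max_in[OF D] Max_ge[OF D(1)] unfolding lo_def D_def by auto
  define hv where "hv = (if U = {} then 1 else f (Min U))"
  have hv1: "hv \<le> 1" using assms(4) Min_in[of U] assms(1) unfolding hv_def U_def by fastforce
  have hvb: "\<And>a. a \<in> A \<Longrightarrow> t < a \<Longrightarrow> hv \<le> f a"
  proof -
    fix a assume a: "a \<in> A" "t < a"
    then have U: "U \<noteq> {}" "finite U" "a \<in> U" using assms(1) unfolding U_def by auto
    have "Min U \<le> a" using Min_le[OF U(2,3)] .
    moreover have "Min U \<in> A" using Min_in[OF U(2,1)] unfolding U_def by auto
    ultimately have "f (Min U) \<le> f a"
      using a assms(3) strict_mono_on_less_eq by (metis)
    then show "hv \<le> f a" using U unfolding hv_def by simp
  qed
  have flo: "f lo < hv"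
  proof (cases "U = {}")
    case True then show ?thesis using assms(4) lo unfolding hv_def by auto
  next
    case False
    then have U: "U \<noteq> {}" "finite U" using assms(1) unfolding U_def by auto
    have "Min U \<in> A" "t < Min U" using Min_in[OF U(2,1)] unfolding U_def by auto
    then have "f lo < f (Min U)" using lo assms(3) by (meson order.strict_trans strict_mono_onD)
    then show ?thesis using False unfolding hv_def by simp
  qed
  define val where "val = (f lo + hv) / 2"
  define g where "g = f(t := val)"
  have "f lo \<ge> 0" using assms(4) lo by auto
  have gA: "\<forall>a\<in>A. g a = f a" using False unfolding g_def by auto
  have "strict_mono_on (insert t A) g"
  proof (rule strict_mono_onI)
    fix r s assume rs: "r \<in> insert t A" "s \<in> insert t A" "r < s"
    show "g r < g s"
    proof (cases "r = t")
      case True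
      then have "s \<in> A" "t < s" using rs by auto
      then show ?thesis using True hvb[of s] flo gA unfolding val_def g_def by auto
    next
      case r: False
      show ?thesis
      proof (cases "s = t")
        case True
        then have "r \<in> A" "r < t" using rs r by auto
        then have "f r \<le> f lo" using lo assms(3) strict_mono_on_less_eq by metis
        then show ?thesis using True flo r unfolding val_def g_def by auto
      next
        case False
        then show ?thesis using r rs assms(3) gA by (auto dest: strict_mono_onD)
      qed
    qed
  qed
  moreover have "g ` insert t A \<subseteq> {0..<1}"
    using assms(4) gA flo hv1 \<open>f lo \<ge> 0\<close> unfolding g_def val_def by auto
  ultimately show ?thesis using gA by blast
qed

lemma ext_fin:
  fixes f :: "real \<Rightarrow> real"
  assumes "finite B" "finite A" "0 \<in> A" "strict_mono_on A f" "f ` A \<subseteq> {0..<1}" "B \<subseteq> {0..<1::real}"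
  shows "\<exists>g. strict_mono_on (A \<union> B) g \<and> (\<forall>a\<in>A. g a = f a) \<and> g ` (A \<union> B) \<subseteq> {0..<1}"
  using assms(1,6)
proof (induction B rule: finite_induct)
  case empty
  then show ?case using assms by (intro exI[of _ f]) auto
next
  case (insert t B)
  then obtain g where g: "strict_mono_on (A \<union> B) g" "\<forall>a\<in>A. g a = f a" "g ` (A \<union> B) \<subseteq> {0..<1}"
    by auto
  obtain h where h: "strict_mono_on (insert t (A \<union> B)) h" "\<forall>a\<in>A \<union> B. h a = g a"
     "h ` insert t (A \<union> B) \<subseteq> {0..<1}"
    using ext_one[OF _ _ g(1) g(3), of t] assms insert by auto
  then show ?case using g by (intro exI[of _ h]) auto
qed

lemma R1:
  fixes a b :: real
  assumes "\<lfloor>a\<rfloor> = \<lfloor>b\<rfloor>" "frac a = 0 \<longleftrightarrow> frac b = 0"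
  shows "(a < of_int c \<longleftrightarrow> b < of_int c) \<and> (a \<le> of_int c \<longleftrightarrow> b \<le> of_int c)"
proof -
  have "a < of_int c \<longleftrightarrow> \<lfloor>a\<rfloor> < c" for a :: real by (simp add: floor_less_iff)
  moreover have "a \<le> of_int c \<longleftrightarrow> \<lfloor>a\<rfloor> < c \<or> (\<lfloor>a\<rfloor> = c \<and> frac a = 0)" for a :: real
    by (smt (verit, best) floor_eq_iff floor_less_iff frac_def)
  ultimately show ?thesis using assms by metis
qed

lemma diff_char:
  fixes x y :: real
  shows "(x - y < of_int c \<longleftrightarrow> \<lfloor>x\<rfloor> - \<lfloor>y\<rfloor> < c \<or> (\<lfloor>x\<rfloor> - \<lfloor>y\<rfloor> = c \<and> frac x < frac y)) \<and>
         (x - y \<le> of_int c \<longleftrightarrow> \<lfloor>x\<rfloor> - \<lfloor>y\<rfloor> < c \<or> (\<lfloor>x\<rfloor> - \<lfloor>y\<rfloor> = c \<and> frac x \<le> frac y))"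
proof -
  have f: "0 \<le> frac x" "frac x < 1" "0 \<le> frac y" "frac y < 1" by (auto simp: frac_lt_1)
  have e: "x - y = of_int (\<lfloor>x\<rfloor> - \<lfloor>y\<rfloor>) + (frac x - frac y)" by (simp add: frac_def)
  define d where "d = \<lfloor>x\<rfloor> - \<lfloor>y\<rfloor>"
  have "d < c \<or> d = c \<or> d > c" by auto
  moreover have "d < c \<Longrightarrow> d + 1 \<le> c" "d > c \<Longrightarrow> d \<ge> c + 1" by auto
  ultimately show ?thesis using f unfolding e d_def[symmetric]
    by (smt (verit) of_int_le_iff of_int_add of_int_1 of_int_less_iff)
qed

lemma R2:
  fixes a b a' b' :: real
  assumes "\<lfloor>a\<rfloor> = \<lfloor>a'\<rfloor>" "\<lfloor>b\<rfloor> = \<lfloor>b'\<rfloor>"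
    "frac a \<le> frac b \<longleftrightarrow> frac a' \<le> frac b'" "frac b \<le> frac a \<longleftrightarrow> frac b' \<le> frac a'"
  shows "(a - b < of_int c \<longleftrightarrow> a' - b' < of_int c) \<and> (a - b \<le> of_int c \<longleftrightarrow> a' - b' \<le> of_int c)"
  using diff_char[of a b c] diff_char[of a' b' c] assms by (auto simp: not_le[symmetric])

lemma R1c:
  fixes a b :: real
  assumes "- real M \<le> a" "a \<le> real M" "M \<le> N"
    "\<And>k::int. \<bar>k\<bar> \<le> int N \<Longrightarrow> (a < of_int k \<longleftrightarrow> b < of_int k) \<and> (a \<le> of_int k \<longleftrightarrow> b \<le> of_int k)"
  shows "\<lfloor>a\<rfloor> = \<lfloor>b\<rfloor> \<and> (frac a = 0 \<longleftrightarrow> frac b = 0)"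
proof -
  define k where "k = \<lfloor>a\<rfloor>"
  have k1: "of_int k \<le> a" "a < of_int k + 1" unfolding k_def by linarith+
  have kr: "- int M \<le> k" "k \<le> int M" using assms(1,2) k1 unfolding k_def by linarith+
  have "of_int k \<le> b" using assms(4)[of k] k1 kr assms(3) by (auto simp: not_le[symmetric])
  moreover have "b < of_int k + 1"
  proof (cases "k + 1 \<le> int N")
    case True
    moreover have "\<bar>k+1\<bar> \<le> int N" using True kr assms(3) by linarith
    ultimately show ?thesis using assms(4)[of "k+1"] k1 kr by auto
  next
    case False
    then have "k = int M" using kr assms(3) by linarith
    then have "a = real M" using assms(2) k1 by simp
    then show ?thesis using assms(4)[of "int M"] \<open>k = int M\<close> assms(3) by auto
  qed
  ultimately have fb: "\<lfloor>b\<rfloor> = k" by linarith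
  have "a \<le> of_int k \<longleftrightarrow> b \<le> of_int k" using assms(4)[of k] kr assms(3) by auto
  moreover have "frac a = 0 \<longleftrightarrow> a \<le> of_int k" using k1 unfolding k_def frac_def by linarith
  moreover have "frac b = 0 \<longleftrightarrow> b \<le> of_int k" using \<open>of_int k \<le> b\<close> fb unfolding frac_def by linarith
  ultimately show ?thesis using fb k_def by simp
qed

lemma R2c:
  fixes a b a' b' :: real
  assumes "\<lfloor>a\<rfloor> = \<lfloor>a'\<rfloor>" "\<lfloor>b\<rfloor> = \<lfloor>b'\<rfloor>" "\<bar>\<lfloor>a\<rfloor> - \<lfloor>b\<rfloor>\<bar> \<le> int N"
    "\<And>k::int. \<bar>k\<bar> \<le> int N \<Longrightarrow> (a - b \<le> of_int k \<longleftrightarrow> a' - b' \<le> of_int k)"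
  shows "frac a \<le> frac b \<longleftrightarrow> frac a' \<le> frac b'"
  using diff_char[of a b "\<lfloor>a\<rfloor> - \<lfloor>b\<rfloor>"] diff_char[of a' b' "\<lfloor>a\<rfloor> - \<lfloor>b\<rfloor>"] assms(1,2) assms(4)[OF assms(3)]
  by auto

lemma simK_int:
  assumes "sim_K K a b" "\<bar>k\<bar> \<le> int K"
  shows "(a < ereal (of_int k) \<longleftrightarrow> b < ereal (of_int k)) \<and> (a \<le> ereal (of_int k) \<longleftrightarrow> b \<le> ereal (of_int k))"
  using assms unfolding sim_K_def by blast

lemma simK_inf:
  assumes "sim_K K a b"
  shows "(a = \<infinity> \<longleftrightarrow> b = \<infinity>) \<and> (a = -\<infinity> \<longleftrightarrow> b = -\<infinity>)"
proof -
  have "a < \<infinity> \<longleftrightarrow> b < \<infinity>" "a \<le> -\<infinity> \<longleftrightarrow> b \<le> -\<infinity>" using assms unfolding sim_K_def by blast+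
  then show ?thesis by (cases a; cases b) auto
qed

lemma fin_ereal: "a \<noteq> \<infinity> \<Longrightarrow> a \<noteq> -\<infinity> \<Longrightarrow> a = ereal (real_of_ereal a)"
  by (cases a) auto

lemma simK_low:
  assumes "sim_K N a b" "- ereal (real M) \<le> a" "M \<le> N" "k \<le> int M"
  shows "(a < ereal (of_int k) \<longleftrightarrow> b < ereal (of_int k)) \<and> (a \<le> ereal (of_int k) \<longleftrightarrow> b \<le> ereal (of_int k))"
proof (cases "\<bar>k\<bar> \<le> int N")
  case True then show ?thesis using simK_int[OF assms(1)] by blast
next
  case False
  then have k: "k < - int N" using assms(3,4) by linarith
  have na: "ereal (of_int (- int N)) \<le> a"
  proof -
    have "ereal (of_int (- int N)) \<le> - ereal (real M)" using assms(3) by simp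
    then show ?thesis using assms(2) by (rule order.trans)
  qed
  have nb: "ereal (of_int (- int N)) \<le> b"
    using na simK_int[OF assms(1), of "- int N"] by (simp add: not_less[symmetric])
  have kk: "ereal (of_int k) < ereal (of_int (- int N))" using k by (simp only: ereal_less(2) of_int_less_iff less_ereal.simps(1))
  have "ereal (of_int k) < a" using kk na by (rule order.strict_trans2)
  moreover have "ereal (of_int k) < b" using kk nb by (rule order.strict_trans2)
  ultimately show ?thesis by (meson leD less_imp_le)
qed
lemma simK_c:
  assumes "sim_K K a b" "c = \<infinity> \<or> c = -\<infinity> \<or> (\<exists>k. c = ereal (of_int k) \<and> \<bar>k\<bar> \<le> int K)"
  shows "(a < c \<longleftrightarrow> b < c) \<and> (a \<le> c \<longleftrightarrow> b \<le> c)"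
proof -
  have "\<forall>c::ereal. (c = \<infinity> \<or> c = -\<infinity> \<or> (\<exists>k::int. c = ereal (of_int k) \<and> \<bar>k\<bar> \<le> int K)) \<longrightarrow>
        ((a < c \<longleftrightarrow> b < c) \<and> (a \<le> c \<longleftrightarrow> b \<le> c))" using assms(1) unfolding sim_K_def .
  then show ?thesis using assms(2) by (elim allE[of _ c]) (erule mp)
qed

lemma cform_fin:
  fixes a b :: real
  assumes "\<And>k. P k \<Longrightarrow> (a < of_int k \<longleftrightarrow> b < of_int k) \<and> (a \<le> of_int k \<longleftrightarrow> b \<le> of_int k)"
    "c = \<infinity> \<or> c = -\<infinity> \<or> (\<exists>k. c = ereal (of_int k) \<and> P k)"
  shows "(ereal a < c \<longleftrightarrow> ereal b < c) \<and> (ereal a \<le> c \<longleftrightarrow> ereal b \<le> c)"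
  using assms by auto

theorem lemma10:
  fixes XF XH :: "'c set" and M :: nat and v1 v2 :: "'c \<Rightarrow> ereal"
  assumes "finite (XF \<union> XH)" and "XF \<inter> XH = {}" and "card (XF \<union> XH) \<ge> 1"
    and "is_valuation XF XH v1" and "is_valuation XF XH v2"
    and "sim_val (XF \<union> XH) M v1 v2"
  shows "\<exists>v2'. is_valuation XF XH v2' \<and>
           (\<forall>x\<in>{x\<in>XF \<union> XH. - ereal (real M) \<le> v1 x}. v2' x = v2 x) \<and>
           approx_val (XF \<union> XH) M v1 v2'"
proof -
  define X where "X = XF \<union> XH"
  define n where "n = card X"
  have n1: "1 \<le> n" using assms(3) unfolding n_def X_def .
  have MN: "M \<le> n * M" using n1 by simp
  have MN1: "2 * M \<le> (n + 1) * M" using n1 by (intro mult_right_mono) auto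
  have finX: "finite X" using assms(1) unfolding X_def .
  have s1: "\<And>x. x \<in> X \<Longrightarrow> sim_K (n * M) (v1 x) (v2 x)"
    using assms(6) unfolding sim_val_def X_def n_def by blast
  have s2: "\<And>x y. x \<in> X \<Longrightarrow> y \<in> X \<Longrightarrow> sim_K ((n+1) * M) (v1 x - v1 y) (v2 x - v2 y)"
    using assms(6) unfolding sim_val_def X_def n_def by blast
  have inf2: "\<And>x. x \<in> X \<Longrightarrow> (v1 x = \<infinity> \<longleftrightarrow> v2 x = \<infinity>) \<and> (v1 x = -\<infinity> \<longleftrightarrow> v2 x = -\<infinity>)"
    using simK_inf s1 by blast
  define r1 where "r1 = (\<lambda>x. real_of_ereal (v1 x))"
  define r2 where "r2 = (\<lambda>x. real_of_ereal (v2 x))"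
  define F where "F = {x\<in>X. - ereal (real M) \<le> v1 x \<and> v1 x \<le> ereal (real M)}"
  define Out where "Out = {x\<in>X. v1 x < - ereal (real M) \<and> v1 x \<noteq> -\<infinity>}"
  have Ffin: "v1 x = ereal (r1 x) \<and> v2 x = ereal (r2 x) \<and> - real M \<le> r1 x \<and> r1 x \<le> real M \<and> x \<in> X"
    if x: "x \<in> F" for x
  proof -
    have "x \<in> X" using x unfolding F_def by auto
    have "v1 x \<noteq> \<infinity>" "v1 x \<noteq> -\<infinity>" using x unfolding F_def by auto
    then have "v2 x \<noteq> \<infinity>" "v2 x \<noteq> -\<infinity>" using inf2[OF \<open>x \<in> X\<close>] by auto
    then show ?thesis using x \<open>v1 x \<noteq> \<infinity>\<close> \<open>v1 x \<noteq> -\<infinity>\<close> unfolding F_def r1_def r2_def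
      by (cases "v1 x"; cases "v2 x") auto
  qed
  have Fk: "(r1 x < of_int k \<longleftrightarrow> r2 x < of_int k) \<and> (r1 x \<le> of_int k \<longleftrightarrow> r2 x \<le> of_int k)"
    if "x \<in> F" "\<bar>k\<bar> \<le> int (n*M)" for x k
    using simK_int[OF s1 that(2), of x] Ffin[OF that(1)] by auto
  have Ffl: "\<lfloor>r1 x\<rfloor> = \<lfloor>r2 x\<rfloor> \<and> (frac (r1 x) = 0 \<longleftrightarrow> frac (r2 x) = 0)" if "x \<in> F" for x
    using R1c[OF _ _ MN, of "r1 x" "r2 x"] Fk[OF that] Ffin[OF that] by blast
  have Ford: "frac (r1 x) \<le> frac (r1 y) \<longleftrightarrow> frac (r2 x) \<le> frac (r2 y)" if "x \<in> F" "y \<in> F" for x y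
  proof (rule R2c)
    show "\<lfloor>r1 x\<rfloor> = \<lfloor>r2 x\<rfloor>" "\<lfloor>r1 y\<rfloor> = \<lfloor>r2 y\<rfloor>" using Ffl that by auto
    have "- int M \<le> \<lfloor>r1 x\<rfloor>" "\<lfloor>r1 x\<rfloor> \<le> int M" "- int M \<le> \<lfloor>r1 y\<rfloor>" "\<lfloor>r1 y\<rfloor> \<le> int M"
      using Ffin[OF that(1)] Ffin[OF that(2)] by (simp_all add: le_floor_iff floor_le_iff)
    then show "\<bar>\<lfloor>r1 x\<rfloor> - \<lfloor>r1 y\<rfloor>\<bar> \<le> int ((n+1)*M)" using MN1 by linarith
    fix k :: int assume "\<bar>k\<bar> \<le> int ((n+1)*M)"
    from simK_int[OF s2[of x y] this] Ffin[OF that(1)] Ffin[OF that(2)]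
    show "r1 x - r1 y \<le> of_int k \<longleftrightarrow> r2 x - r2 y \<le> of_int k" by auto
  qed
  define fr1 where "fr1 = (\<lambda>x. frac (r1 x))"
  define A where "A = insert 0 (fr1 ` F)"
  define phi where "phi = (\<lambda>t. if t = 0 then 0 else frac (r2 (SOME x. x \<in> F \<and> fr1 x = t)))"
  have phiF: "phi (fr1 x) = frac (r2 x)" if x: "x \<in> F" for x
  proof (cases "fr1 x = 0")
    case True then show ?thesis using Ffl[OF x] unfolding phi_def fr1_def by simp
  next
    case False
    define x' where "x' = (SOME x'. x' \<in> F \<and> fr1 x' = fr1 x)"
    have x': "x' \<in> F \<and> fr1 x' = fr1 x"
      unfolding x'_def using someI[of "\<lambda>x'. x' \<in> F \<and> fr1 x' = fr1 x" x] x by blast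
    then have "frac (r2 x') = frac (r2 x)" using Ford[OF _ x, of x'] Ford[OF x, of x'] unfolding fr1_def by auto
    then show ?thesis using False unfolding phi_def x'_def[symmetric] by simp
  qed
  have phi0: "phi 0 = 0" unfolding phi_def by simp
  have phimono: "strict_mono_on A phi"
  proof (rule strict_mono_onI)
    fix s t assume st: "s \<in> A" "t \<in> A" "s < t"
    have "0 \<le> s" using st(1) unfolding A_def fr1_def by auto
    then have "t \<noteq> 0" using st by auto
    then obtain y where y: "y \<in> F" "t = fr1 y" using st(2) unfolding A_def by auto
    show "phi s < phi t"
    proof (cases "s = 0")
      case True
      have "frac (r2 y) \<noteq> 0" using Ffl[OF y(1)] y \<open>t\<noteq>0\<close> unfolding fr1_def by auto
      then have "0 < frac (r2 y)" using frac_ge_0[of "r2 y"] by linarith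
      then show ?thesis using True phi0 phiF[OF y(1)] y(2) by simp
    next
      case False
      obtain x where x: "x \<in> F" "s = fr1 x" using st(1) False unfolding A_def by auto
      have "\<not> fr1 y \<le> fr1 x" using st x y by auto
      then have "\<not> frac (r2 y) \<le> frac (r2 x)" using Ford[OF y(1) x(1)] unfolding fr1_def by simp
      then show ?thesis using phiF x y by simp
    qed
  qed
  have phirange: "phi ` A \<subseteq> {0..<1}" unfolding A_def using phiF phi0 by (auto simp: frac_lt_1)
  define B where "B = fr1 ` Out"
  have finA: "finite A" unfolding A_def F_def using finX by auto
  have finB: "finite B" unfolding B_def Out_def using finX by auto
  have Brange: "B \<subseteq> {0..<1}" unfolding B_def fr1_def by (auto simp: frac_lt_1)
  obtain psi where psi: "strict_mono_on (A \<union> B) psi" "\<forall>a\<in>A. psi a = phi a" "psi ` (A \<union> B) \<subseteq> {0..<1}"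
    using ext_fin[OF finB finA _ phimono phirange Brange] unfolding A_def by auto
  define v2' where "v2' = (\<lambda>y. if y \<in> Out then ereal (of_int \<lfloor>r1 y\<rfloor> + psi (fr1 y)) else v2 y)"
  define q where "q = (\<lambda>x. real_of_ereal (v2' x))"
  define G where "G = F \<union> Out"
  have FO: "F \<inter> Out = {}" unfolding F_def Out_def by auto
  have Ofin: "v1 x = ereal (r1 x) \<and> r1 x < - real M \<and> x \<in> X \<and> q x < - real M" if x: "x \<in> Out" for x
  proof -
    have "x \<in> X" "v1 x < - ereal (real M)" "v1 x \<noteq> -\<infinity>" using x unfolding Out_def by auto
    then have v: "v1 x = ereal (r1 x)" "r1 x < - real M" unfolding r1_def by (cases "v1 x"; auto)+
    have "fr1 x \<in> A \<union> B" using x unfolding B_def by auto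
    then have "psi (fr1 x) < 1" using psi(3) by auto
    moreover have "\<lfloor>r1 x\<rfloor> < - int M" using v(2) by (simp add: floor_less_iff)
    ultimately have "q x < - real M" using x unfolding q_def v2'_def by simp
    then show ?thesis using v \<open>x \<in> X\<close> by auto
  qed
  have Gfacts: "v1 x = ereal (r1 x) \<and> v2' x = ereal (q x) \<and> \<lfloor>q x\<rfloor> = \<lfloor>r1 x\<rfloor> \<and> frac (q x) = psi (fr1 x)
      \<and> fr1 x \<in> A \<union> B \<and> x \<in> X" if x: "x \<in> G" for x
  proof (cases "x \<in> Out")
    case True
    have "fr1 x \<in> A \<union> B" using True unfolding B_def by auto
    then have p: "0 \<le> psi (fr1 x)" "psi (fr1 x) < 1" using psi(3) by auto
    have "v2' x = ereal (of_int \<lfloor>r1 x\<rfloor> + psi (fr1 x))" using True unfolding v2'_def by simp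
    moreover have "\<lfloor>of_int \<lfloor>r1 x\<rfloor> + psi (fr1 x)\<rfloor> = \<lfloor>r1 x\<rfloor>" using p by (simp add: floor_eq_iff)
    moreover have "frac (of_int \<lfloor>r1 x\<rfloor> + psi (fr1 x)) = psi (fr1 x)" using p by simp
    ultimately show ?thesis using Ofin[OF True] \<open>fr1 x \<in> A \<union> B\<close> unfolding q_def by simp
  next
    case False
    then have xF: "x \<in> F" using x unfolding G_def by auto
    have "v2' x = v2 x" using False unfolding v2'_def by simp
    moreover have "fr1 x \<in> A" unfolding A_def using xF by auto
    ultimately show ?thesis using Ffin[OF xF] Ffl[OF xF] phiF[OF xF] psi(2) unfolding q_def by auto
  qed
  have Gord: "fr1 x \<le> fr1 y \<longleftrightarrow> frac (q x) \<le> frac (q y)" if "x \<in> G" "y \<in> G" for x y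
    using Gfacts[OF that(1)] Gfacts[OF that(2)] strict_mono_on_less_eq[OF psi(1)] by auto
  have psi0: "psi 0 = 0" using psi(2) phi0 unfolding A_def by auto
  have Gzero: "fr1 x = 0 \<longleftrightarrow> frac (q x) = 0" if "x \<in> G" for x
  proof -
    have "0 \<in> A \<union> B" unfolding A_def by auto
    then show ?thesis using Gfacts[OF that] strict_mono_on_eq[OF psi(1), of "fr1 x" 0] psi0 by auto
  qed
  have Gcmp: "(r1 x < of_int k \<longleftrightarrow> q x < of_int k) \<and> (r1 x \<le> of_int k \<longleftrightarrow> q x \<le> of_int k)" if "x \<in> G" for x k
    using R1[of "r1 x" "q x" k] Gfacts[OF that] Gzero[OF that] unfolding fr1_def by auto
  have Gdiff: "(r1 x - r1 y < of_int k \<longleftrightarrow> q x - q y < of_int k) \<and> (r1 x - r1 y \<le> of_int k \<longleftrightarrow> q x - q y \<le> of_int k)"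
    if "x \<in> G" "y \<in> G" for x y k
    using R2[of "r1 x" "q x" "r1 y" "q y" k] Gfacts[OF that(1)] Gfacts[OF that(2)] Gord[OF that] Gord[OF that(2,1)]
    unfolding fr1_def by auto
  have notO: "v2' x = v2 x" if "x \<notin> Out" for x using that unfolding v2'_def by simp
  have val: "is_valuation XF XH v2'"
    unfolding is_valuation_def
  proof (intro conjI ballI)
    fix x assume x: "x \<in> XH"
    then have "0 \<le> v1 x" using assms(4) unfolding is_valuation_def by auto
    then have "x \<notin> Out" unfolding Out_def by (cases "v1 x") auto
    then show "0 \<le> v2' x" using notO x assms(5) unfolding is_valuation_def by auto
  next
    fix x assume x: "x \<in> XF"
    show "v2' x \<le> 0"
    proof (cases "x \<in> Out")
      case True
      then have "v2' x = ereal (q x)" "q x < - real M" using Gfacts[of x] Ofin[OF True] unfolding G_def by auto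
      then show ?thesis by simp
    next
      case False
      then show ?thesis using notO x assms(5) unfolding is_valuation_def by auto
    qed
  qed
  have agree: "\<forall>x\<in>{x\<in>XF \<union> XH. - ereal (real M) \<le> v1 x}. v2' x = v2 x"
  proof
    fix x assume "x \<in> {x\<in>XF \<union> XH. - ereal (real M) \<le> v1 x}"
    then have "x \<notin> Out" unfolding Out_def by (auto simp: not_less[symmetric])
    then show "v2' x = v2 x" by (rule notO)
  qed
  have types: "x \<in> G \<or> (v1 x = \<infinity> \<and> v2' x = \<infinity>) \<or> (v1 x = -\<infinity> \<and> v2' x = -\<infinity>) \<or>
      (x \<notin> Out \<and> real M < r1 x \<and> real M < q x \<and> v1 x = ereal (r1 x) \<and> v2' x = ereal (q x))"
    if x: "x \<in> X" for x
  proof (cases "x \<in> G")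
    case False
    then have xO: "x \<notin> Out" "x \<notin> F" unfolding G_def by auto
    then have v2'x: "v2' x = v2 x" using notO by simp
    show ?thesis
    proof (cases "v1 x = \<infinity> \<or> v1 x = -\<infinity>")
      case True then show ?thesis using inf2[OF x] v2'x by auto
    next
      case False
      then have v1: "v1 x = ereal (r1 x)" unfolding r1_def by (cases "v1 x") auto
      have "v2 x \<noteq> \<infinity>" "v2 x \<noteq> -\<infinity>" using False inf2[OF x] by auto
      then have v2: "v2 x = ereal (r2 x)" unfolding r2_def by (cases "v2 x") auto
      have "real M < r1 x" using xO x v1 False unfolding Out_def F_def by auto
      moreover have "\<bar>int M\<bar> \<le> int (n * M)" using MN by (simp only: abs_of_nat of_nat_le_iff)
      from simK_int[OF s1[OF x] this] have "r1 x \<le> real M \<longleftrightarrow> r2 x \<le> real M" using v1 v2 by simp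
      ultimately have "real M < r2 x" by linarith
      then show ?thesis using \<open>real M < r1 x\<close> v1 v2 v2'x xO unfolding q_def by auto
    qed
  qed auto
  have approx: "approx_val (XF \<union> XH) M v1 v2'"
    unfolding approx_val_def X_def[symmetric]
  proof (intro conjI; intro ballI allI impI)
    fix x c assume x: "x \<in> X" and c: "c = \<infinity> \<or> c = -\<infinity> \<or> (\<exists>k. c = ereal (of_int k) \<and> k \<le> int M)"
    show "(v1 x < c \<longleftrightarrow> v2' x < c) \<and> (v1 x \<le> c \<longleftrightarrow> v2' x \<le> c)"
    proof (cases "x \<in> Out")
      case True
      then have xG: "x \<in> G" unfolding G_def by auto
      show ?thesis using cform_fin[where P="\<lambda>k. k \<le> int M", OF Gcmp[OF xG] c] Gfacts[OF xG] by simp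
    next
      case False
      then have v: "v2' x = v2 x" using notO by simp
      show ?thesis
      proof (cases "v1 x = -\<infinity>")
        case True then show ?thesis using inf2[OF x] v by simp
      next
        case False
        then have lo: "- ereal (real M) \<le> v1 x" using \<open>x \<notin> Out\<close> x unfolding Out_def by auto
        from c consider "c = \<infinity> \<or> c = -\<infinity>" | k where "c = ereal (of_int k)" "k \<le> int M" by blast
        then show ?thesis
        proof cases
          case 1 then show ?thesis using inf2[OF x] v by (cases "v1 x"; cases "v2 x") auto
        next
          case 2 then show ?thesis using simK_low[OF s1[OF x] lo MN] v by simp
        qed
      qed
    qed
  next
    fix x y c assume x: "x \<in> X" and y: "y \<in> X"
      and c: "c = \<infinity> \<or> c = -\<infinity> \<or> (\<exists>k. c = ereal (of_int k) \<and> \<bar>k\<bar> \<le> int M)"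
    show "(v1 x - v1 y < c \<longleftrightarrow> v2' x - v2' y < c) \<and> (v1 x - v1 y \<le> c \<longleftrightarrow> v2' x - v2' y \<le> c)"
    proof (cases "x \<notin> Out \<and> y \<notin> Out")
      case True
      then have v: "v2' x = v2 x" "v2' y = v2 y" using notO by auto
      have MM: "M \<le> (n+1)*M" using MN1 by linarith
      have MM': "int M \<le> int ((n+1)*M)" using MM by (simp only: of_nat_le_iff)
      have "c = \<infinity> \<or> c = -\<infinity> \<or> (\<exists>k. c = ereal (of_int k) \<and> \<bar>k\<bar> \<le> int ((n+1)*M))"
        using c MM' by (blast intro: order_trans)
      from simK_c[OF s2[OF x y] this] show ?thesis using v by simp
    next
      case False
      show ?thesis
      proof (cases "x \<in> G \<and> y \<in> G")
        case True
        show ?thesis using cform_fin[where P="\<lambda>k. \<bar>k\<bar> \<le> int M", OF Gdiff[OF True[THEN conjunct1] True[THEN conjunct2]] c]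
          Gfacts[OF True[THEN conjunct1]] Gfacts[OF True[THEN conjunct2]] by simp
      next
        case nG: False
        show ?thesis
        proof (cases "x \<in> Out")
          case True
          then have xG: "x \<in> G" unfolding G_def by auto
          have fx: "v1 x = ereal (r1 x)" "v2' x = ereal (q x)" "r1 x < - real M" "q x < - real M"
            using Gfacts[OF xG] Ofin[OF True] by auto
          from types[OF y] nG xG consider "v1 y = \<infinity> \<and> v2' y = \<infinity>" | "v1 y = -\<infinity> \<and> v2' y = -\<infinity>" |
            "real M < r1 y \<and> real M < q y \<and> v1 y = ereal (r1 y) \<and> v2' y = ereal (q y)" by blast
          then show ?thesis
          proof cases
            case 1 then show ?thesis using fx by simp
          next
            case 2 then show ?thesis using fx by simp
          next
            case 3
            have "(r1 x - r1 y < of_int k \<longleftrightarrow> q x - q y < of_int k) \<and> (r1 x - r1 y \<le> of_int k \<longleftrightarrow> q x - q y \<le> of_int k)"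
              if "\<bar>k\<bar> \<le> int M" for k
              using that 3 fx by auto
            from cform_fin[where P="\<lambda>k. \<bar>k\<bar> \<le> int M", OF this c] show ?thesis using fx 3 by simp
          qed
        next
          case False
          then have yO: "y \<in> Out" using \<open>\<not> (x \<notin> Out \<and> y \<notin> Out)\<close> by auto
          then have yG: "y \<in> G" unfolding G_def by auto
          have fy: "v1 y = ereal (r1 y)" "v2' y = ereal (q y)" "r1 y < - real M" "q y < - real M"
            using Gfacts[OF yG] Ofin[OF yO] by auto
          from types[OF x] nG yG consider "v1 x = \<infinity> \<and> v2' x = \<infinity>" | "v1 x = -\<infinity> \<and> v2' x = -\<infinity>" |
            "real M < r1 x \<and> real M < q x \<and> v1 x = ereal (r1 x) \<and> v2' x = ereal (q x)" by blast
          then show ?thesis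
          proof cases
            case 1 then show ?thesis using fy by simp
          next
            case 2 then show ?thesis using fy by simp
          next
            case 3
            have "(r1 x - r1 y < of_int k \<longleftrightarrow> q x - q y < of_int k) \<and> (r1 x - r1 y \<le> of_int k \<longleftrightarrow> q x - q y \<le> of_int k)"
              if "\<bar>k\<bar> \<le> int M" for k
              using that 3 fy by auto
            from cform_fin[where P="\<lambda>k. \<bar>k\<bar> \<le> int M", OF this c] show ?thesis using fy 3 by simp
          qed
        qed
      qed
    qed
  next
    fix x y assume x: "x \<in> X" and y: "y \<in> X"
      and h: "- \<infinity> < v1 x \<and> v1 x \<le> ereal (real M) \<and> - \<infinity> < v1 y \<and> v1 y \<le> ereal (real M)"
    have inG: "z \<in> G" if "z \<in> X" "- \<infinity> < v1 z" "v1 z \<le> ereal (real M)" for z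
      using that unfolding G_def F_def Out_def by (cases "- ereal (real M) \<le> v1 z") auto
    have xG: "x \<in> G" and yG: "y \<in> G" using inG x y h by auto
    show "efrac (v1 x) \<le> efrac (v1 y) \<longleftrightarrow> efrac (v2' x) \<le> efrac (v2' y)"
      using Gord[OF xG yG] unfolding efrac_def fr1_def r1_def q_def by simp
  qed
  show ?thesis using val agree approx by blast
qed

end
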